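(* Let $\beta$ be an algebraic number such that one of its conjugates (roots of its minimal polynomial over $\mathbb{Q}$) is a real number greater than $1$. Then $p_\beta(\alpha) < \infty$ for every $\alpha \in \mathbb{R}$.
   Context: For $\beta, \alpha \in \mathbb{C}$, $p_\beta(\alpha) \in \mathbb{Z}_{\geq 0}\cup\{\infty\}$ is the number of polynomials $f \in \mathbb{Z}_{\geq 0}[x]$ (non-negative integer coefficients) with $f(\beta) = \alpha$. *)

theory Defs
  imports Complex_Main "HOL-Computational_Algebra.Polynomial" "HOL-Library.Extended_Nat"
begin

text \<open>Minimal polynomial over the rationals of a complex number: the unique monic
  irreducible rational polynomial having it as a root (meaningful for algebraic numbers).\<close>
definition rat_min_poly :: "complex \<Rightarrow> rat poly" where
  "rat_min_poly b = (THE p. lead_coeff p = 1 \<and> irreducible p \<and> poly (map_poly of_rat p) b = 0)"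

definition conjugates :: "complex \<Rightarrow> complex set" where
  "conjugates b = {z. poly (map_poly of_rat (rat_min_poly b)) z = 0}"

text \<open>Polynomials with non-negative integer coefficients are modelled as nat poly.\<close>
definition rep_set :: "complex \<Rightarrow> complex \<Rightarrow> nat poly set" where
  "rep_set b a = {f :: nat poly. poly (map_poly of_nat f) b = a}"

definition p_count :: "complex \<Rightarrow> complex \<Rightarrow> enat" where
  "p_count b a = (if finite (rep_set b a) then enat (card (rep_set b a)) else \<infinity>)"

end

theory Submission
  imports Defs "HOL-Computational_Algebra.Computational_Algebra" "HOL-Computational_Algebra.Field_as_Ring"
begin

lemma mr_add: "map_poly (of_rat :: rat \<Rightarrow> complex) (p + q) = map_poly of_rat p + map_poly of_rat q"
  by (intro poly_eqI) (simp add: coeff_map_poly of_rat_add)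

lemma mr_diff: "map_poly (of_rat :: rat \<Rightarrow> complex) (p - q) = map_poly of_rat p - map_poly of_rat q"
  by (intro poly_eqI) (simp add: coeff_map_poly of_rat_diff)

lemma mr_mult: "map_poly (of_rat :: rat \<Rightarrow> complex) (p * q) = map_poly of_rat p * map_poly of_rat q"
  by (intro poly_eqI) (simp add: coeff_map_poly coeff_mult of_rat_sum of_rat_mult)

lemma mr_one: "map_poly (of_rat :: rat \<Rightarrow> complex) 1 = 1"
  by simp

lemma irr_dvd:
  fixes m p :: "rat poly" and b :: complex
  assumes "irreducible m" "poly (map_poly of_rat m) b = 0" "poly (map_poly of_rat p) b = 0"
  shows "m dvd p"
proof -
  obtain x y where "bezout_coefficients m p = (x,y)" by force
  then have g: "x*m + y*p = gcd m p" by (rule bezout_coefficients)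
  have r: "poly (map_poly of_rat (gcd m p)) b = 0"
    unfolding g[symmetric] using assms(2,3) by (simp add: mr_add mr_mult)
  have "gcd m p dvd m" by simp
  then obtain k where k: "m = gcd m p * k" by (elim dvdE)
  from irreducibleD[OF assms(1) k] show ?thesis
  proof
    assume "is_unit (gcd m p)"
    then have "gcd m p = 1" by (simp add: is_unit_gcd coprime_iff_gcd_eq_1)
    with r show ?thesis by simp
  next
    assume u: "is_unit k"
    have "gcd m p * k dvd gcd m p" using u by (simp add: mult_unit_dvd_iff)
    then have "m dvd gcd m p" using k by simp
    then show ?thesis using dvd_trans gcd_dvd2 by blast
  qed
qed

lemma exists_irr:
  fixes p :: "rat poly"
  shows "p \<noteq> 0 \<Longrightarrow> poly (map_poly (of_rat :: rat \<Rightarrow> complex) p) b = 0 \<Longrightarrow>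
     \<exists>q::rat poly. irreducible q \<and> poly (map_poly (of_rat :: rat \<Rightarrow> complex) q) b = 0"
proof (induction "degree p" arbitrary: p rule: less_induct)
  case less
  show ?case
  proof (cases "irreducible p")
    case True
    then show ?thesis using less by blast
  next
    case False
    have nu: "\<not> is_unit p"
    proof
      assume "is_unit p"
      then have "degree p = 0" using is_unit_iff_degree less.prems(1) by blast
      then obtain c where "p = [:c:]" by (meson degree_eq_zeroE)
      with less.prems show False by (simp add: map_poly_pCons)
    qed
    from False nu less.prems(1) obtain a c where ac: "p = a * c" "\<not> is_unit a" "\<not> is_unit c"
      unfolding irreducible_def by blast
    have a0: "a \<noteq> 0" "c \<noteq> 0" using ac less.prems(1) by auto
    have da: "degree a > 0" "degree c > 0" using a0 ac is_unit_iff_degree by auto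
    have dp: "degree p = degree a + degree c" using ac a0 degree_mult_eq by blast
    have "poly (map_poly (of_rat :: rat \<Rightarrow> complex) a) b = 0 \<or> poly (map_poly (of_rat :: rat \<Rightarrow> complex) c) b = 0"
      using less.prems(2) unfolding ac by (simp add: mr_mult)
    then show ?thesis
    proof
      assume "poly (map_poly (of_rat :: rat \<Rightarrow> complex) a) b = 0"
      then show ?thesis using less.hyps[of a] a0 da dp by auto
    next
      assume "poly (map_poly (of_rat :: rat \<Rightarrow> complex) c) b = 0"
      then show ?thesis using less.hyps[of c] a0 da dp by auto
    qed
  qed
qed

lemma alg_rat:
  assumes "algebraic (b::complex)"
  shows "\<exists>p::rat poly. p \<noteq> 0 \<and> poly (map_poly of_rat p) b = 0"
proof -
  from assms obtain p :: "int poly" where p: "p \<noteq> 0" "poly (map_poly of_int p) b = 0"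
    by (erule algebraicE')
  define q :: "rat poly" where "q = map_poly of_int p"
  have "map_poly (of_rat :: rat \<Rightarrow> complex) q = map_poly of_int p"
    unfolding q_def by (simp add: map_poly_map_poly o_def)
  moreover have "q \<noteq> 0" unfolding q_def using p(1) by (simp add: map_poly_eq_0_iff)
  ultimately show ?thesis using p by metis
qed

lemma min_poly_props:
  fixes b :: complex
  assumes "algebraic b"
  shows "lead_coeff (rat_min_poly b) = 1 \<and> irreducible (rat_min_poly b) \<and>
         poly (map_poly of_rat (rat_min_poly b)) b = 0"
proof -
  obtain p :: "rat poly" where "p \<noteq> 0" "poly (map_poly of_rat p) b = 0" using alg_rat[OF assms] by blast
  then obtain q :: "rat poly" where q: "irreducible q" "poly (map_poly of_rat q) b = 0"
    using exists_irr by blast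
  have q0: "q \<noteq> 0" using q(1) by auto
  define c where "c = inverse (lead_coeff q)"
  have c0: "c \<noteq> 0" using q0 by (simp add: c_def)
  define q' where "q' = [:c:] * q"
  have u: "is_unit [:c:]" using c0 by (simp add: is_unit_poly_iff dvd_field_iff)
  have P: "lead_coeff q' = 1 \<and> irreducible q' \<and> poly (map_poly of_rat q') b = 0"
  proof (intro conjI)
    show "lead_coeff q' = 1" using q0 unfolding q'_def by (simp add: c_def lead_coeff_mult)
    show "irreducible q'" unfolding q'_def using irreducible_mult_unit_left[OF u] q(1) by blast
    show "poly (map_poly of_rat q') b = 0" unfolding q'_def mr_mult poly_mult using q(2) by simp
  qed
  have U: "r = q'" if "lead_coeff r = 1 \<and> irreducible r \<and> poly (map_poly of_rat r) b = 0" for r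
  proof -
    have "r dvd q'" "q' dvd r" using irr_dvd that P by blast+
    then have "normalize r = normalize q'" by (simp add: associated_iff_dvd)
    moreover have "normalize r = r" "normalize q' = q'" using that P
      by (simp_all add: normalize_poly_eq_map_poly)
    ultimately show ?thesis by simp
  qed
  show ?thesis unfolding rat_min_poly_def
    by (rule theI[of _ q']) (use P U in blast)+
qed


lemma poly_nat_sum:
  "poly (map_poly (of_nat :: nat \<Rightarrow> real) f) t = (\<Sum>i\<le>degree f. real (coeff f i) * t^i)"
proof -
  have "degree (map_poly (of_nat :: nat \<Rightarrow> real) f) = degree f"
    by (rule degree_map_poly) simp
  then show ?thesis by (simp add: poly_altdef coeff_map_poly)
qed

lemma fin_level:
  fixes t C :: real
  assumes t: "t > 1"
  shows "finite {f :: nat poly. poly (map_poly of_nat f) t = C}"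
proof -
  obtain N where N: "C < t ^ N" using real_arch_pow[OF t] by blast
  define M where "M = nat \<lfloor>C\<rfloor>"
  let ?L = "{xs. set xs \<subseteq> {..M} \<and> length xs \<le> N + 1}"
  have "{f :: nat poly. poly (map_poly of_nat f) t = C} \<subseteq> Poly ` ?L"
  proof
    fix f :: "nat poly" assume "f \<in> {f. poly (map_poly of_nat f) t = C}"
    then have fC: "(\<Sum>i\<le>degree f. real (coeff f i) * t^i) = C" by (simp add: poly_nat_sum)
    have term_le: "real (coeff f i) * t^i \<le> C" if "i \<le> degree f" for i
      unfolding fC[symmetric] using t that
      by (intro member_le_sum) auto
    have cb: "real (coeff f i) \<le> C" if "i \<le> degree f" for i
    proof -
      have "real (coeff f i) * 1 \<le> real (coeff f i) * t^i"
        using t by (intro mult_left_mono) auto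
      then show ?thesis using term_le[OF that] by simp
    qed
    have cM: "coeff f i \<le> M" if "i \<le> degree f" for i
      using cb[OF that] unfolding M_def by linarith
    have dN: "degree f \<le> N"
    proof (cases "f = 0")
      case False
      have "coeff f (degree f) \<noteq> 0" using False by simp
      then have "coeff f (degree f) \<ge> 1" by linarith
      then have "t ^ degree f \<le> real (coeff f (degree f)) * t ^ degree f"
      proof -
        have "0 \<le> t ^ degree f" using t by simp
        moreover have "1 \<le> real (coeff f (degree f))" using \<open>coeff f (degree f) \<ge> 1\<close> by simp
        ultimately show ?thesis using mult_right_mono[of 1 "real (coeff f (degree f))" "t ^ degree f"] by simp
      qed
      also have "\<dots> \<le> C" using term_le by simp
      finally have "t ^ degree f < t ^ N" using N by simp
      then show ?thesis using t by (simp add: power_strict_increasing_iff)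
    qed simp
    have "coeffs f \<in> ?L"
    proof (cases "f = 0")
      case False
      have "set (coeffs f) \<subseteq> {..M}"
      proof
        fix x assume "x \<in> set (coeffs f)"
        then obtain n where n: "n < length (coeffs f)" "x = coeffs f ! n" by (auto simp: in_set_conv_nth)
        then have "n \<le> degree f" using False by (simp add: length_coeffs)
        then show "x \<in> {..M}" using n False cM by (simp add: coeffs_nth)
      qed
      then show ?thesis using False dN by (simp add: length_coeffs)
    qed simp
    then show "f \<in> Poly ` ?L" by (metis Poly_coeffs image_eqI)
  qed
  moreover have "finite ?L" by (rule finite_lists_length_le) simp
  ultimately show ?thesis by (meson finite_imageI finite_subset)
qed

lemma poly_nat_ofreal:
  "poly (map_poly (of_nat :: nat \<Rightarrow> complex) f) (complex_of_real t) =
   complex_of_real (poly (map_poly of_nat f) t)"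
  by (induction f) (simp_all add: map_poly_pCons)

lemma map_rat_nat:
  "map_poly (of_rat :: rat \<Rightarrow> complex) (map_poly of_nat f) = map_poly of_nat f"
  by (simp add: map_poly_map_poly o_def)

theorem proposition5:
  fixes \<beta> :: complex
  assumes "algebraic \<beta>"
    and "\<exists>\<gamma>\<in>conjugates \<beta>. \<gamma> \<in> \<real> \<and> Re \<gamma> > 1"
  shows "\<forall>\<alpha>::real. p_count \<beta> (complex_of_real \<alpha>) < \<infinity>"
proof
  fix \<alpha> :: real
  let ?a = "complex_of_real \<alpha>"
  let ?m = "rat_min_poly \<beta>"
  have mp: "irreducible ?m" "poly (map_poly of_rat ?m) \<beta> = 0"
    using min_poly_props[OF assms(1)] by auto
  obtain \<gamma> where g: "\<gamma> \<in> conjugates \<beta>" "\<gamma> \<in> \<real>" "Re \<gamma> > 1" using assms(2) by blast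
  define t where "t = Re \<gamma>"
  have gt: "\<gamma> = complex_of_real t" using g(2) unfolding t_def by (simp add: complex_is_Real_iff complex_eq_iff)
  have groot: "poly (map_poly of_rat ?m) \<gamma> = 0" using g(1) by (simp add: conjugates_def)
  have same: "poly (map_poly of_nat f) t = poly (map_poly of_nat g) t"
    if "f \<in> rep_set \<beta> ?a" "g \<in> rep_set \<beta> ?a" for f g
  proof -
    define r :: "rat poly" where "r = map_poly of_nat f - map_poly of_nat g"
    have mr: "map_poly (of_rat :: rat \<Rightarrow> complex) r = map_poly of_nat f - map_poly of_nat g"
      unfolding r_def mr_diff map_rat_nat ..
    have "poly (map_poly of_rat r) \<beta> = 0" using that unfolding mr by (simp add: rep_set_def)
    then have "?m dvd r" using irr_dvd[OF mp] by blast
    then obtain k where "r = ?m * k" by (elim dvdE)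
    then have "poly (map_poly of_rat r) \<gamma> = 0" using groot by (simp add: mr_mult)
    then have "poly (map_poly (of_nat :: nat \<Rightarrow> complex) f) (complex_of_real t) =
               poly (map_poly of_nat g) (complex_of_real t)" unfolding mr gt by simp
    then show ?thesis unfolding poly_nat_ofreal by simp
  qed
  have "finite (rep_set \<beta> ?a)"
  proof (cases "rep_set \<beta> ?a = {}")
    case False
    then obtain f0 where f0: "f0 \<in> rep_set \<beta> ?a" by blast
    have "rep_set \<beta> ?a \<subseteq> {f :: nat poly. poly (map_poly of_nat f) t = poly (map_poly of_nat f0) t}"
      using same f0 by blast
    moreover have "t > 1" using g(3) t_def by simp
    ultimately show ?thesis using fin_level finite_subset by blast
  qed simp
  then show "p_count \<beta> ?a < \<infinity>" by (simp add: p_count_def)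
qed

end
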